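(* Let $d\in\{2,3\}$ and let $k^1,\dots,k^{d+1}\in\mathbb{Z}^d_0$ be given by $k^1=(0,1)$, $k^2=(1,0)$, $k^3=(1,1)$ when $d=2$, and $k^1=(0,0,1)$, $k^2=(0,1,0)$, $k^3=(1,0,0)$, $k^4=(1,1,1)$ when $d=3$. Let $K=\{k^1,\dots,k^{d+1}\}\cup\{-k^1,\dots,-k^{d+1}\}$. For $k\in\mathbb{Z}^d_0$ and $i\in\{1,\dots,d-1\}$ define the vector field on $\mathbb{T}^d\times SL_d(\mathbb{R})$ \[ Z_{k,i}(x,A)=\begin{pmatrix}e_k(x)\gamma_k^i\\ e_{-k}(x)(\gamma_k^i\otimes k)A\end{pmatrix}\in T_x\mathbb{T}^d\times T_ASL_d(\mathbb{R}). \] Then at each $(x,A)\in\mathbb{T}^d\times SL_d(\mathbb{R})$, \[ \operatorname{Span}\{Z_{k,i}(x,A):k\in K,\ i\in\{1,\dots,d-1\}\}=T_x\mathbb{T}^d\times T_ASL_d(\mathbb{R}). \]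
   Context: $\mathbb{T}^d=[0,2\pi]^d$ periodic; $\mathbb{Z}^d_+=\{k: k_d>0\}\cup\{k: k_1>0,k_d=0\}$, $\mathbb{Z}^d_-=-\mathbb{Z}^d_+$, $\mathbb{Z}^d_0=\mathbb{Z}^d\setminus\{0\}$; $e_k(x)=\sin(k\cdot x)$ for $k\in\mathbb{Z}^d_+$ and $\cos(k\cdot x)$ for $k\in\mathbb{Z}^d_-$. For each $k\in\mathbb{Z}^d_0$, $\gamma_k$ is a $d\times(d-1)$ matrix with columns $\gamma_k^1,\dots,\gamma_k^{d-1}$, $\gamma_k^\top k=0$, $\gamma_k^\top\gamma_k=\mathrm{Id}$, $\gamma_{-k}=-\gamma_k$. $\gamma\otimes k$ denotes the matrix $\gamma k^\top$. (These $Z_{k,i}$ are the Lie brackets $[e_k\gamma_k^i,G]$ with the drift $G$ of $\dot x=u(x)$, $\dot A=\nabla u(x)A$.) *)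

theory Defs
  imports "HOL-Analysis.Analysis"
begin

text \<open>Lattice points k in Z^d are int^'n; the coordinate order is the linorder on 'n
  (first coordinate = least index, last coordinate d = greatest index).\<close>

definition posZ :: "int^'n::{finite,linorder} \<Rightarrow> bool" where
  "posZ k \<longleftrightarrow> k \<noteq> 0 \<and> k $ (Max {i. k $ i \<noteq> 0}) > 0"

definition kdot :: "int^'n::finite \<Rightarrow> real^'n \<Rightarrow> real" where
  "kdot k x = (\<Sum>i\<in>UNIV. of_int (k $ i) * x $ i)"

definition ek :: "int^('n::{finite,linorder}) \<Rightarrow> real^('n::{finite,linorder}) \<Rightarrow> real" where
  "ek k x = (if posZ k then sin (kdot k x) else cos (kdot k x))"

definition realvec :: "int^'n::finite \<Rightarrow> real^'n" where
  "realvec k = (\<chi> i. of_int (k $ i))"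

definition outer :: "real^'n::finite \<Rightarrow> real^'n \<Rightarrow> real^'n^'n" where
  "outer g v = (\<chi> a b. g $ a * v $ b)"

definition admissible_gamma :: "(int^'n::finite \<Rightarrow> 'm::finite \<Rightarrow> real^'n) \<Rightarrow> bool" where
  "admissible_gamma \<gamma> \<longleftrightarrow>
     (\<forall>k. k \<noteq> 0 \<longrightarrow>
        (\<forall>i. \<gamma> k i \<bullet> realvec k = 0) \<and>
        (\<forall>i j. \<gamma> k i \<bullet> \<gamma> k j = (if i = j then 1 else 0)) \<and>
        (\<forall>i. \<gamma> (-k) i = - \<gamma> k i))"

definition Zfield ::
  "(int^('n::{finite,linorder}) \<Rightarrow> ('m::finite) \<Rightarrow> real^('n::{finite,linorder})) \<Rightarrow> int^('n::{finite,linorder}) \<Rightarrow> 'm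
     \<Rightarrow> real^('n::{finite,linorder}) \<Rightarrow> real^('n::{finite,linorder})^('n::{finite,linorder}) \<Rightarrow> (real^('n::{finite,linorder})) \<times> (real^('n::{finite,linorder})^('n::{finite,linorder}))" where
  "Zfield \<gamma> k i x A =
     (ek k x *\<^sub>R \<gamma> k i, ek (-k) x *\<^sub>R (outer (\<gamma> k i) (realvec k) ** A))"

text \<open>Tangent space of SL_d(R) at A: kernel of the differential of det, i.e.
  {B. tr(A^{-1} B) = 0}.\<close>
definition tangent_SL :: "real^'n::finite^'n \<Rightarrow> (real^'n^'n) set" where
  "tangent_SL A = {B. trace (matrix_inv A ** B) = 0}"

definition Kset :: "(int^'n::finite) set" where
  "Kset = (let K0 = range (\<lambda>i. axis i 1) \<union> {\<chi> i. 1} in K0 \<union> uminus ` K0)"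

end

theory Submission
  imports Defs
begin

lemma minv: fixes A :: "real^'n::finite^'n" assumes "det A = 1"
  shows "A ** matrix_inv A = mat 1 \<and> matrix_inv A ** A = mat 1"
proof -
  have "invertible A" using assms by (simp add: invertible_det_nz)
  then show ?thesis unfolding matrix_inv_def invertible_def by (rule someI_ex)
qed

lemma posZ_neg: fixes k :: "int^'n::{finite,linorder}" assumes "k \<noteq> 0"
  shows "posZ (-k) \<longleftrightarrow> \<not> posZ k"
proof -
  let ?S = "{i. k $ i \<noteq> 0}"
  have e: "{i. (-k) $ i \<noteq> 0} = ?S" by auto
  have "?S \<noteq> {}" using assms by (auto simp: vec_eq_iff)
  then have "Max ?S \<in> ?S" by (intro Max_in) auto
  then have nz: "k $ Max ?S \<noteq> 0" by simp
  have nk: "- k \<noteq> 0" using assms by simp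
  have p1: "posZ k \<longleftrightarrow> k $ Max ?S > 0" unfolding posZ_def using assms by simp
  have p2: "posZ (-k) \<longleftrightarrow> (-k) $ Max ?S > 0" unfolding posZ_def e using nk by simp
  show ?thesis unfolding p1 p2 using nz by auto
qed

lemma ek_sq: fixes k :: "int^'n::{finite,linorder}" assumes "k \<noteq> 0"
  shows "(ek k x)^2 + (ek (-k) x)^2 = 1"
proof -
  have kd: "kdot (-k) x = - kdot k x" unfolding kdot_def by (simp add: sum_negf)
  show ?thesis using posZ_neg[OF assms] unfolding ek_def kd by auto
qed

lemma outer_add: "outer (a + b) v = outer a v + outer b v"
  by (simp add: outer_def vec_eq_iff algebra_simps)
lemma outer_scale: "outer (c *\<^sub>R a) v = c *\<^sub>R outer a v"
  by (simp add: outer_def vec_eq_iff algebra_simps)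
lemma outer_zero: "outer 0 v = 0"
  by (simp add: outer_def vec_eq_iff)
lemma trace_outer: "trace (outer g v) = g \<bullet> v"
  by (simp add: outer_def trace_def inner_vec_def)

lemma gamma_span:
  fixes \<gamma> :: "int^('n::{finite,linorder}) \<Rightarrow> ('m::finite) \<Rightarrow> real^('n::{finite,linorder})"
  assumes "CARD('m) = CARD('n) - 1" "admissible_gamma \<gamma>" "k \<noteq> 0"
    and "w \<bullet> realvec k = 0"
  shows "w \<in> span (range (\<gamma> k))"
proof -
  have rk: "realvec k \<noteq> 0" using assms(3) by (auto simp: realvec_def vec_eq_iff)
  have orth: "\<And>i j. \<gamma> k i \<bullet> \<gamma> k j = (if i = j then 1 else 0)"
    and perp: "\<And>i. \<gamma> k i \<bullet> realvec k = 0"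
    using assms(2,3) unfolding admissible_gamma_def by auto
  have inj: "inj (\<gamma> k)"
  proof (rule injI)
    fix i j assume "\<gamma> k i = \<gamma> k j"
    then have "\<gamma> k i \<bullet> \<gamma> k j = 1" using orth[of i i] by simp
    then show "i = j" using orth[of i j] by (auto split: if_splits)
  qed
  have ind: "independent (range (\<gamma> k))"
  proof (rule pairwise_orthogonal_independent)
    show "pairwise orthogonal (range (\<gamma> k))"
      unfolding pairwise_def orthogonal_def using orth by auto
    show "0 \<notin> range (\<gamma> k)" using orth by (metis imageE inner_zero_left zero_neq_one)
  qed
  have "{x. realvec k \<bullet> x = 0} \<subseteq> span (range (\<gamma> k))"
  proof (rule card_ge_dim_independent)
    show "range (\<gamma> k) \<subseteq> {x. realvec k \<bullet> x = 0}" using perp by (auto simp: inner_commute)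
    show "independent (range (\<gamma> k))" by (rule ind)
    show "dim {x. realvec k \<bullet> x = 0} \<le> card (range (\<gamma> k))"
      using dim_hyperplane[OF rk] assms(1) card_image[OF inj] by simp
  qed
  then show ?thesis using assms(4) by (auto simp: inner_commute)
qed

lemma matrix_add_rdistrib: "((B + C) ** (A::real^'n::finite^'n)) = (B ** A) + (C ** A)"
  by (simp add: matrix_matrix_mult_def vec_eq_iff sum.distrib algebra_simps)

lemma trace_zero: "trace (0::real^'n::finite^'n) = 0"
  by (simp add: trace_def)

lemma trace_scale: "trace (c *\<^sub>R (M::real^'n::finite^'n)) = c * trace M"
  by (simp add: trace_def sum_distrib_left)
lemma mult_scale_right: "(X::real^'n::finite^'n) ** (c *\<^sub>R M) = c *\<^sub>R (X ** M)"
  by (simp add: matrix_matrix_mult_def vec_eq_iff sum_distrib_left mult_ac)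
lemma realvec_axis: "realvec (axis j (1::int)) = axis j 1"
  by (simp add: realvec_def axis_def vec_eq_iff)
lemma realvec_one: "realvec (\<chi> i. (1::int)) = (\<chi> i. 1)"
  by (simp add: realvec_def vec_eq_iff)
lemma outer_neg: "outer (- g) (realvec (-k)) = outer g (realvec k)"
  by (simp add: outer_def realvec_def vec_eq_iff)

lemma subspace_T: "subspace ((UNIV::(real^'n::finite) set) \<times> {B::real^'n^'n. trace (C ** B) = 0})"
proof -
  have z: "0 \<in> (UNIV::(real^'n) set) \<times> {B::real^'n^'n. trace (C ** B) = 0}"
    unfolding zero_prod_def by (simp add: trace_def)
  have add: "trace (C ** (B1 + B2)) = 0" if "trace (C ** B1) = 0" "trace (C ** B2) = 0" for B1 B2
    by (simp add: matrix_add_ldistrib trace_add that)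
  have sc: "trace (C ** (c *\<^sub>R B)) = 0" if "trace (C ** B) = 0" for c B
    by (simp add: mult_scale_right trace_scale that)
  show ?thesis unfolding subspace_def using z add sc by (auto simp: mem_Times_iff)
qed

lemma decomp: fixes M :: "real^'n::finite^'n"
  shows "M = (\<Sum>j\<in>UNIV. outer ((\<chi> a. M$a$j) - (\<chi> a. M$a$a)) (axis j 1)) + outer (\<chi> a. M$a$a) (\<chi> i. 1)"
  by (simp add: vec_eq_iff outer_def axis_def algebra_simps sum.distrib sum_subtractf
     if_distrib cong: if_cong)

theorem lemma5p4:
  fixes \<gamma> :: "int^('n::{finite,linorder}) \<Rightarrow> ('m::finite) \<Rightarrow> real^('n::{finite,linorder})"
    and x :: "real^('n::{finite,linorder})"
    and A :: "real^('n::{finite,linorder})^('n::{finite,linorder})"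
  assumes "CARD('n) = 2 \<or> CARD('n) = 3"
    and "CARD('m) = CARD('n) - 1"
    and "admissible_gamma \<gamma>"
    and "det A = 1"
  shows "span ((\<lambda>(k, i). Zfield \<gamma> k i x A) ` (Kset \<times> UNIV)) = UNIV \<times> tangent_SL A"
proof -
  define S where "S = (\<lambda>(k, i). Zfield \<gamma> k i x A) ` (Kset \<times> UNIV)"
  define iA where "iA = matrix_inv A"
  have inv: "A ** iA = mat 1" "iA ** A = mat 1" using minv[OF assms(4)] iA_def by auto
  have Knz: "k \<noteq> 0" if "k \<in> Kset" for k
    using that unfolding Kset_def Let_def
    by (auto simp: vec_eq_iff axis_def)
  have Kax: "axis j 1 \<in> Kset" "- axis j 1 \<in> Kset" for j
    unfolding Kset_def Let_def by auto
  have Kone: "(\<chi> i. 1) \<in> Kset" "- (\<chi> i. 1) \<in> Kset"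
    unfolding Kset_def Let_def by auto
  have adm: "\<And>i. \<gamma> k i \<bullet> realvec k = 0" "\<And>i. \<gamma> (-k) i = - \<gamma> k i" if "k \<noteq> 0" for k
    using assms(3) that unfolding admissible_gamma_def by auto
  define P where "P = {v. (v, 0) \<in> span S}"
  define Q where "Q = {M. (0, M ** A) \<in> span S}"
  have z0: "(0, 0) \<in> span S" using span_zero[of S] by (simp add: zero_prod_def)
  have a1: "(v + w, 0) \<in> span S" if "(v, 0) \<in> span S" "(w, 0) \<in> span S" for v w
    using span_add[OF that] by simp
  have a2: "(c *\<^sub>R v, 0) \<in> span S" if "(v, 0) \<in> span S" for c v
    using span_scale[OF that, of c] by simp
  have subP: "subspace P" unfolding P_def subspace_def using z0 a1 a2 by auto
  have b1: "(0, (M + N) ** A) \<in> span S" if "(0, M ** A) \<in> span S" "(0, N ** A) \<in> span S" for M N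
    using span_add[OF that] by (simp add: matrix_add_rdistrib)
  have b2: "(0, (c *\<^sub>R M) ** A) \<in> span S" if "(0, M ** A) \<in> span S" for c M
    using span_scale[OF that, of c] by (simp add: scalar_matrix_assoc)
  have subQ: "subspace Q" unfolding Q_def subspace_def using z0 b1 b2 by auto
  have pair: "(\<gamma> k i, 0) \<in> span S \<and> outer (\<gamma> k i) (realvec k) \<in> Q"
    if "k \<in> Kset" "-k \<in> Kset" for k i
  proof -
    have k0: "k \<noteq> 0" using Knz that by auto
    define a where "a = ek k x"
    define b where "b = ek (-k) x"
    define g where "g = \<gamma> k i"
    define N where "N = outer g (realvec k) ** A"
    have ab: "a^2 + b^2 = 1" using ek_sq[OF k0] a_def b_def by simp
    have Z1: "(a *\<^sub>R g, b *\<^sub>R N) \<in> span S"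
      unfolding S_def using that(1)
      by (intro span_base image_eqI[where x="(k, i)"]) (auto simp: Zfield_def a_def b_def g_def N_def)
    have Z2: "(- (b *\<^sub>R g), a *\<^sub>R N) \<in> span S"
      unfolding S_def using that(2)
      by (intro span_base image_eqI[where x="(-k, i)"])
         (auto simp: Zfield_def a_def b_def g_def N_def adm[OF k0] outer_neg)
    have m1: "a *\<^sub>R (a *\<^sub>R g, b *\<^sub>R N) - b *\<^sub>R (- (b *\<^sub>R g), a *\<^sub>R N) \<in> span S"
      using Z1 Z2 by (intro span_diff span_scale)
    have e1: "a *\<^sub>R (a *\<^sub>R g, b *\<^sub>R N) - b *\<^sub>R (- (b *\<^sub>R g), a *\<^sub>R N) = (g, 0)"
      using ab by (simp add: scaleR_add_left[symmetric] power2_eq_square algebra_simps)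
    have m2: "b *\<^sub>R (a *\<^sub>R g, b *\<^sub>R N) + a *\<^sub>R (- (b *\<^sub>R g), a *\<^sub>R N) \<in> span S"
      using Z1 Z2 by (intro span_add span_scale)
    have e2: "b *\<^sub>R (a *\<^sub>R g, b *\<^sub>R N) + a *\<^sub>R (- (b *\<^sub>R g), a *\<^sub>R N) = (0, N)"
      using ab by (simp add: scaleR_add_left[symmetric] power2_eq_square algebra_simps)
    have "(g, 0) \<in> span S" using m1 unfolding e1 .
    moreover have "(0, N) \<in> span S" using m2 unfolding e2 .
    ultimately show ?thesis unfolding Q_def N_def g_def by auto
  qed
  have perpw: "(w, 0) \<in> span S \<and> outer w (realvec k) \<in> Q"
    if "k \<in> Kset" "-k \<in> Kset" "w \<bullet> realvec k = 0" for k w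
  proof -
    have k0: "k \<noteq> 0" using Knz that by auto
    have w: "w \<in> span (range (\<gamma> k))" using gamma_span[OF assms(2,3) k0 that(3)] .
    have s1: "span (range (\<gamma> k)) \<subseteq> P"
      by (rule span_minimal) (use pair that subP in \<open>auto simp: P_def\<close>)
    have sub2: "subspace {w. outer w (realvec k) \<in> Q}"
      using subQ unfolding subspace_def
      by (auto simp: outer_add outer_scale outer_zero)
    have s2: "span (range (\<gamma> k)) \<subseteq> {w. outer w (realvec k) \<in> Q}"
      by (rule span_minimal) (use pair that sub2 in auto)
    show ?thesis using w s1 s2 unfolding P_def by auto
  qed
  have PU: "P = UNIV"
  proof -
    have ax: "axis j 1 \<in> P" for j
    proof -
      have "\<exists>j'. j' \<noteq> j"
      proof (rule ccontr)
        assume "\<not> (\<exists>j'. j' \<noteq> j)"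
        then have u: "UNIV = {j}" by auto
        show False using assms(1) unfolding u by simp
      qed
      then obtain j' where "j' \<noteq> j" by blast
      then have "axis j 1 \<bullet> realvec (axis j' 1) = 0"
        by (simp add: realvec_axis inner_axis_axis)
      then show "axis j 1 \<in> P" using perpw[OF Kax(1,2)[of j']] by (simp add: P_def)
    qed
    have "Basis \<subseteq> P" using ax by (auto simp: Basis_vec_def)
    then have "span Basis \<subseteq> P" using subP by (rule span_minimal)
    then show ?thesis by auto
  qed
  have TQ: "M \<in> Q" if "trace M = 0" for M
  proof -
    define w where "w = (\<chi> a. M$a$a)"
    have "outer w (realvec (\<chi> i. 1)) \<in> Q"
      using perpw[OF Kone] that by (simp add: w_def inner_vec_def trace_def realvec_def)
    moreover have "outer ((\<chi> a. M$a$j) - w) (realvec (axis j 1)) \<in> Q" for j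
      using perpw[OF Kax(1,2)[of j]] by (simp add: w_def inner_axis realvec_axis)
    ultimately have "(\<Sum>j\<in>UNIV. outer ((\<chi> a. M$a$j) - w) (axis j 1)) + outer w (\<chi> i. 1) \<in> Q"
      using subQ by (intro subspace_add subspace_sum) (auto simp: realvec_axis realvec_one)
    moreover have eq: "(\<Sum>j\<in>UNIV. outer ((\<chi> a. M$a$j) - w) (axis j 1)) + outer w (\<chi> i. 1) = M"
      unfolding w_def by (rule decomp[symmetric])
    ultimately show ?thesis by simp
  qed
  have Ssub: "S \<subseteq> UNIV \<times> tangent_SL A"
    proof
      fix z assume "z \<in> S"
      then obtain k i where k: "k \<in> Kset" and z: "z = Zfield \<gamma> k i x A" unfolding S_def by auto
      have "trace (iA ** (outer (\<gamma> k i) (realvec k) ** A)) = trace (outer (\<gamma> k i) (realvec k))"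
      proof -
        have "trace (iA ** (outer (\<gamma> k i) (realvec k) ** A)) = trace ((outer (\<gamma> k i) (realvec k) ** A) ** iA)"
          by (rule trace_mul_sym)
        also have "\<dots> = trace (outer (\<gamma> k i) (realvec k) ** (A ** iA))"
          by (simp only: matrix_mul_assoc)
        finally show ?thesis by (simp only: inv(1) matrix_mul_rid)
      qed
      also have "\<dots> = 0" using adm(1)[OF Knz[OF k]] by (simp add: trace_outer)
      finally show "z \<in> UNIV \<times> tangent_SL A"
        by (simp add: z Zfield_def tangent_SL_def iA_def[symmetric] mult_scale_right trace_scale)
    qed
  have sub1: "span S \<subseteq> UNIV \<times> tangent_SL A"
    using span_minimal[OF Ssub] subspace_T[of "matrix_inv A"] unfolding tangent_SL_def by blast
  have sub2: "(v, B) \<in> span S" if "B \<in> tangent_SL A" for v B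
  proof -
    have B: "trace (iA ** B) = 0" using that by (simp add: tangent_SL_def iA_def)
    have "trace (B ** iA) = 0" using B trace_mul_sym by metis
    then have "B ** iA \<in> Q" by (rule TQ)
    then have "(0, B) \<in> span S" unfolding Q_def
      by (simp add: matrix_mul_assoc[symmetric] inv(2))
    moreover have "(v, 0) \<in> span S" using PU unfolding P_def by auto
    ultimately show "(v, B) \<in> span S" using span_add[of "(v, 0)" S "(0, B)"] by simp
  qed
  have sub3: "UNIV \<times> tangent_SL A \<subseteq> span S" using sub2 by blast
  show ?thesis unfolding S_def[symmetric] using sub1 sub3 by (rule equalityI)
qed

end
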